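(* For every $f\in\mathcal{F}_3$ and every $\mathbf{x}\in[0,1]^3$, letting $k\in\{1,2,3\}$ be the unique index with $f\in\mathcal{S}_3^k$, $$f^{+}(\mathbf{x})=\min\Big(\min_{i\in\{4k-2,4k-1,4k,4k+1\}}\Big(\lambda_{i0}+\sum_{j=1}^3\lambda_{ij}x_j\Big),\ \min_{\ell\in\{1,14\}}\Big(\lambda_{\ell0}+\sum_{j=1}^3\lambda_{\ell j}x_j\Big)\Big),$$ where the vectors $\boldsymbol\lambda_i=(\lambda_{i0},\lambda_{i1},\lambda_{i2},\lambda_{i3})$ are: $\boldsymbol\lambda_1=(0,f(1),f(2),f(3))$; $\boldsymbol\lambda_2=(f(2)-f(2|3),\,f(1)-f(2)+f(2|3),\,f(2|3),\,f(3|2))$; $\boldsymbol\lambda_3=(f(1)-f(1|3),\,f(1|3),\,f(2|3),\,f(3|1))$; $\boldsymbol\lambda_4=(f(2)-f(2|1),\,f(1|2),\,f(2|1),\,f(3|2))$; $\boldsymbol\lambda_5=(f(2,3)-f(3|1)-f(2|1),\,f(2|1)+f(1,3)-f(2,3),\,f(2|1),\,f(3|1))$; $\boldsymbol\lambda_6=(f(1)-f(1|3),\,f(1|3),\,f(2)-f(1)+f(1|3),\,f(3|1))$; $\boldsymbol\lambda_7=(f(2)-f(2|3),\,f(1|3),\,f(2|3),\,f(3|2))$; $\boldsymbol\lambda_8=(f(2)-f(2|1),\,f(1|2),\,f(2|1),\,f(3|1))$; $\boldsymbol\lambda_9=(f(1,3)-f(1|2)-f(3|2),\,f(1|2),\,f(1|2)+f(2,3)-f(1,3),\,f(3|2))$;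 $\boldsymbol\lambda_{10}=(f(1)-f(1|2),\,f(1|2),\,f(2|1),\,f(3)-f(2)+f(2|1))$; $\boldsymbol\lambda_{11}=(f(2)-f(2|3),\,f(1|2),\,f(2|3),\,f(3|2))$; $\boldsymbol\lambda_{12}=(f(3)-f(3|1),\,f(1|3),\,f(2|1),\,f(3|1))$; $\boldsymbol\lambda_{13}=(f(1,2)-f(1|3)-f(2|3),\,f(1|3),\,f(2|3),\,f(2|3)+f(1,3)-f(1,2))$; $\boldsymbol\lambda_{14}=(f(1,2)+f(1,3)+f(2,3)-2,\,1-f(2,3),\,1-f(1,3),\,1-f(1,2))$.
   Context: $[n]=\{1,\dots,n\}$. A set function $f:2^{[n]}\to\mathbb{R}_+$ is monotone if $f(S)\le f(T)$ for $S\subseteq T$, submodular if $f(S)+f(T)\ge f(S\cap T)+f(S\cup T)$. $\mathcal{F}_n$ is the set of monotone submodular $f:2^{[n]}\to\mathbb{R}_+$ with $f(\emptyset)=0$, $f([n])=1$. Write $f(i)=f(\{i\})$, $f(i,j)=f(\{i,j\})$, $f(i|j)=f(\{i,j\})-f(\{j\})$. Define $\mathcal{F}_3^1=\{f\in\mathcal{F}_3: f(3|2)\ge f(3|1),\ f(2|3)\ge f(2|1)\}$, $\mathcal{F}_3^2=\{f\in\mathcal{F}_3: f(3|1)\ge f(3|2),\ f(1|3)\ge f(1|2)\}$, $\mathcal{F}_3^3=\{f\in\mathcal{F}_3: f(2|1)\ge f(2|3),\ f(1|2)\ge f(1|3)\}$, and $\mathcal{S}_3^k=\mathcal{F}_3^k\setminus\bigcup_{j<k}\mathcal{F}_3^j$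 for $k=1,2,3$ (these partition $\mathcal{F}_3$). For $\mathbf{x}\in[0,1]^n$, the concave closure is $f^{+}(\mathbf{x})=\max\sum_{S\subseteq[n]}\theta(S)f(S)$ over $\theta:2^{[n]}\to\mathbb{R}_{\ge0}$ with $\sum_S\theta(S)=1$ and $\sum_{S\ni i}\theta(S)=x_i$ for all $i\in[n]$. *)

theory Defs
  imports Complex_Main
begin

text \<open>Set functions on the ground set [n] = {1..n} are modelled as nat set => real;
  only their values on subsets of {1..n} matter.\<close>

definition monotone_sf :: "nat \<Rightarrow> (nat set \<Rightarrow> real) \<Rightarrow> bool" where
  "monotone_sf n f \<longleftrightarrow> (\<forall>S T. S \<subseteq> T \<and> T \<subseteq> {1..n} \<longrightarrow> f S \<le> f T)"

definition submodular_sf :: "nat \<Rightarrow> (nat set \<Rightarrow> real) \<Rightarrow> bool" where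
  "submodular_sf n f \<longleftrightarrow> (\<forall>S T. S \<subseteq> {1..n} \<and> T \<subseteq> {1..n} \<longrightarrow>
      f S + f T \<ge> f (S \<inter> T) + f (S \<union> T))"

definition Fcl :: "nat \<Rightarrow> (nat set \<Rightarrow> real) set" where
  "Fcl n = {f. monotone_sf n f \<and> submodular_sf n f \<and> (\<forall>S\<subseteq>{1..n}. f S \<ge> 0)
              \<and> f {} = 0 \<and> f {1..n} = 1}"

definition marg :: "(nat set \<Rightarrow> real) \<Rightarrow> nat \<Rightarrow> nat \<Rightarrow> real" where
  "marg f i j = f {i, j} - f {j}"

definition F31 :: "(nat set \<Rightarrow> real) set" where
  "F31 = {f \<in> Fcl 3. marg f 3 2 \<ge> marg f 3 1 \<and> marg f 2 3 \<ge> marg f 2 1}"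
definition F32 :: "(nat set \<Rightarrow> real) set" where
  "F32 = {f \<in> Fcl 3. marg f 3 1 \<ge> marg f 3 2 \<and> marg f 1 3 \<ge> marg f 1 2}"
definition F33 :: "(nat set \<Rightarrow> real) set" where
  "F33 = {f \<in> Fcl 3. marg f 2 1 \<ge> marg f 2 3 \<and> marg f 1 2 \<ge> marg f 1 3}"

definition S3 :: "nat \<Rightarrow> (nat set \<Rightarrow> real) set" where
  "S3 k = (if k = 1 then F31 else if k = 2 then F32 - F31
           else if k = 3 then F33 - (F31 \<union> F32) else {})"

definition concave_closure :: "nat \<Rightarrow> (nat set \<Rightarrow> real) \<Rightarrow> (nat \<Rightarrow> real) \<Rightarrow> real" where
  "concave_closure n f x = Sup {(\<Sum>S\<in>Pow {1..n}. \<theta> S * f S) | \<theta>.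
      (\<forall>S. \<theta> S \<ge> 0) \<and> (\<Sum>S\<in>Pow {1..n}. \<theta> S) = 1 \<and>
      (\<forall>i\<in>{1..n}. (\<Sum>S\<in>{S\<in>Pow {1..n}. i \<in> S}. \<theta> S) = x i)}"

text \<open>The coefficient vectors lambda_1, ..., lambda_14 (list index i-1, entries 0..3).\<close>
definition lamvecs :: "(nat set \<Rightarrow> real) \<Rightarrow> real list list" where
  "lamvecs f = [
    [0, f {1}, f {2}, f {3}],
    [f {2} - marg f 2 3, f {1} - f {2} + marg f 2 3, marg f 2 3, marg f 3 2],
    [f {1} - marg f 1 3, marg f 1 3, marg f 2 3, marg f 3 1],
    [f {2} - marg f 2 1, marg f 1 2, marg f 2 1, marg f 3 2],
    [f {2,3} - marg f 3 1 - marg f 2 1, marg f 2 1 + f {1,3} - f {2,3}, marg f 2 1, marg f 3 1],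
    [f {1} - marg f 1 3, marg f 1 3, f {2} - f {1} + marg f 1 3, marg f 3 1],
    [f {2} - marg f 2 3, marg f 1 3, marg f 2 3, marg f 3 2],
    [f {2} - marg f 2 1, marg f 1 2, marg f 2 1, marg f 3 1],
    [f {1,3} - marg f 1 2 - marg f 3 2, marg f 1 2, marg f 1 2 + f {2,3} - f {1,3}, marg f 3 2],
    [f {1} - marg f 1 2, marg f 1 2, marg f 2 1, f {3} - f {2} + marg f 2 1],
    [f {2} - marg f 2 3, marg f 1 2, marg f 2 3, marg f 3 2],
    [f {3} - marg f 3 1, marg f 1 3, marg f 2 1, marg f 3 1],
    [f {1,2} - marg f 1 3 - marg f 2 3, marg f 1 3, marg f 2 3, marg f 2 3 + f {1,3} - f {1,2}],
    [f {1,2} + f {1,3} + f {2,3} - 2, 1 - f {2,3}, 1 - f {1,3}, 1 - f {1,2}]]"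

definition lam :: "(nat set \<Rightarrow> real) \<Rightarrow> nat \<Rightarrow> nat \<Rightarrow> real" where
  "lam f i j = lamvecs f ! (i - 1) ! j"

definition aff :: "(nat set \<Rightarrow> real) \<Rightarrow> nat \<Rightarrow> (nat \<Rightarrow> real) \<Rightarrow> real" where
  "aff f i x = lam f i 0 + (\<Sum>j=1..3. lam f i j * x j)"

end

theory Submission imports Defs begin

lemma i3: "{1..3::nat} = {1,2,3}" by auto

lemma pow3: "Pow {1..3::nat} = {{},{1},{2},{3},{1,2},{1,3},{2,3},{1,2,3}}"
  unfolding i3 by (simp add: Pow_insert insert_commute)

lemma sum_pow3: "(\<Sum>S\<in>Pow {1..3::nat}. g S) = g {} + g {1} + g {2} + g {3} + g {1,2} + g {1,3} + g {2,3} + g {1,2,3}"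
  unfolding pow3 by (simp add: sum.insert_if doubleton_eq_iff insert_commute add.assoc, auto simp: doubleton_eq_iff insert_eq_iff)

lemma m1: "{S\<in>Pow {1..3::nat}. 1 \<in> S} = {{1},{1,2},{1,3},{1,2,3}}"
  unfolding pow3 by auto
lemma m2: "{S\<in>Pow {1..3::nat}. 2 \<in> S} = {{2},{1,2},{2,3},{1,2,3}}"
  unfolding pow3 by auto
lemma m3: "{S\<in>Pow {1..3::nat}. 3 \<in> S} = {{3},{1,3},{2,3},{1,2,3}}"
  unfolding pow3 by auto
lemma sm1: "(\<Sum>S\<in>{S\<in>Pow {1..3::nat}. 1 \<in> S}. g S) = g {1} + g {1,2} + g {1,3} + g {1,2,3}"
  unfolding m1 by (simp add: sum.insert_if doubleton_eq_iff insert_commute add.assoc, auto simp: doubleton_eq_iff insert_eq_iff)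
lemma sm2: "(\<Sum>S\<in>{S\<in>Pow {1..3::nat}. 2 \<in> S}. g S) = g {2} + g {1,2} + g {2,3} + g {1,2,3}"
  unfolding m2 by (simp add: sum.insert_if doubleton_eq_iff insert_commute add.assoc, auto simp: doubleton_eq_iff insert_eq_iff)
lemma sm3: "(\<Sum>S\<in>{S\<in>Pow {1..3::nat}. 3 \<in> S}. g S) = g {3} + g {1,3} + g {2,3} + g {1,2,3}"
  unfolding m3 by (simp add: sum.insert_if doubleton_eq_iff insert_commute add.assoc, auto simp: doubleton_eq_iff insert_eq_iff)


lemma lin8: fixes a b c d e g h k c0 c1 c2 c3 :: real shows
 "a * c0 + b * (c0 + c1) + c * (c0 + c2) + d * (c0 + c3) + e * (c0 + c1 + c2) + g * (c0 + c1 + c3)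
   + h * (c0 + c2 + c3) + k * (c0 + c1 + c2 + c3)
  = c0 * (a+b+c+d+e+g+h+k) + c1 * (b+e+g+k) + c2 * (c+e+h+k) + c3 * (d+g+h+k)"
  by (simp add: algebra_simps)

lemma ub:
  fixes \<theta> :: "nat set \<Rightarrow> real" and c :: "nat \<Rightarrow> real" and f :: "nat set \<Rightarrow> real"
  assumes nn: "\<forall>S. \<theta> S \<ge> 0" and s1: "(\<Sum>S\<in>Pow {1..3::nat}. \<theta> S) = 1"
    and mg: "\<forall>i\<in>{1..3}. (\<Sum>S\<in>{S\<in>Pow {1..3::nat}. i \<in> S}. \<theta> S) = x i"
    and d0: "f {} \<le> c 0" and d1: "f {1} \<le> c 0 + c 1" and d2: "f {2} \<le> c 0 + c 2"
    and d3: "f {3} \<le> c 0 + c 3" and d12: "f {1,2} \<le> c 0 + c 1 + c 2"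
    and d13: "f {1,3} \<le> c 0 + c 1 + c 3" and d23: "f {2,3} \<le> c 0 + c 2 + c 3"
    and d123: "f {1,2,3} \<le> c 0 + c 1 + c 2 + c 3"
  shows "(\<Sum>S\<in>Pow {1..3::nat}. \<theta> S * f S) \<le> c 0 + (\<Sum>j=1..3. c j * x j)"
proof -
  have x1: "x 1 = \<theta> {1} + \<theta> {1,2} + \<theta> {1,3} + \<theta> {1,2,3}" using mg[rule_format, of 1, unfolded sm1] by simp
  have x2: "x 2 = \<theta> {2} + \<theta> {1,2} + \<theta> {2,3} + \<theta> {1,2,3}" using mg[rule_format, of 2, unfolded sm2] by simp
  have x3: "x 3 = \<theta> {3} + \<theta> {1,3} + \<theta> {2,3} + \<theta> {1,2,3}" using mg[rule_format, of 3, unfolded sm3] by simp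
  have S1: "\<theta> {} + \<theta> {1} + \<theta> {2} + \<theta> {3} + \<theta> {1,2} + \<theta> {1,3} + \<theta> {2,3} + \<theta> {1,2,3} = 1"
    using s1 unfolding sum_pow3 by simp
  have e0: "\<theta> {} * f {} \<le> \<theta> {} * c 0" using nn d0 by (simp add: mult_left_mono)
  have e1: "\<theta> {1} * f {1} \<le> \<theta> {1} * (c 0 + c 1)" using nn d1 by (simp add: mult_left_mono)
  have e2: "\<theta> {2} * f {2} \<le> \<theta> {2} * (c 0 + c 2)" using nn d2 by (simp add: mult_left_mono)
  have e3: "\<theta> {3} * f {3} \<le> \<theta> {3} * (c 0 + c 3)" using nn d3 by (simp add: mult_left_mono)
  have e12: "\<theta> {1,2} * f {1,2} \<le> \<theta> {1,2} * (c 0 + c 1 + c 2)" using nn d12 by (simp add: mult_left_mono)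
  have e13: "\<theta> {1,3} * f {1,3} \<le> \<theta> {1,3} * (c 0 + c 1 + c 3)" using nn d13 by (simp add: mult_left_mono)
  have e23: "\<theta> {2,3} * f {2,3} \<le> \<theta> {2,3} * (c 0 + c 2 + c 3)" using nn d23 by (simp add: mult_left_mono)
  have e123: "\<theta> {1,2,3} * f {1,2,3} \<le> \<theta> {1,2,3} * (c 0 + c 1 + c 2 + c 3)" using nn d123 by (simp add: mult_left_mono)
  have "(\<Sum>S\<in>Pow {1..3::nat}. \<theta> S * f S) \<le> \<theta> {} * c 0 + \<theta> {1} * (c 0 + c 1) + \<theta> {2} * (c 0 + c 2)
     + \<theta> {3} * (c 0 + c 3) + \<theta> {1,2} * (c 0 + c 1 + c 2) + \<theta> {1,3} * (c 0 + c 1 + c 3)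
     + \<theta> {2,3} * (c 0 + c 2 + c 3) + \<theta> {1,2,3} * (c 0 + c 1 + c 2 + c 3)"
    unfolding sum_pow3 using e0 e1 e2 e3 e12 e13 e23 e123 by linarith
  also have "\<dots> = c 0 * (\<theta> {} + \<theta> {1} + \<theta> {2} + \<theta> {3} + \<theta> {1,2} + \<theta> {1,3} + \<theta> {2,3} + \<theta> {1,2,3})
     + c 1 * x 1 + c 2 * x 2 + c 3 * x 3"
    unfolding x1 x2 x3 by (rule lin8)
  also have "\<dots> = c 0 + (\<Sum>j=1..3. c j * x j)" unfolding S1 i3 by simp
  finally show ?thesis .
qed

lemma wit:
  fixes f :: "nat set \<Rightarrow> real"
  assumes "t0 \<ge> 0" "t1 \<ge> 0" "t2 \<ge> 0" "t3 \<ge> 0" "t12 \<ge> 0" "t13 \<ge> 0" "t23 \<ge> 0" "t123 \<ge> 0"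
    "t0 + t1 + t2 + t3 + t12 + t13 + t23 + t123 = 1"
    "t1 + t12 + t13 + t123 = x 1" "t2 + t12 + t23 + t123 = x 2" "t3 + t13 + t23 + t123 = x 3"
  shows "t0 * f {} + t1 * f {1} + t2 * f {2} + t3 * f {3} + t12 * f {1,2} + t13 * f {1,3}
     + t23 * f {2,3} + t123 * f {1,2,3} \<in> {(\<Sum>S\<in>Pow {1..3}. \<theta> S * f S) | \<theta>.
      (\<forall>S. \<theta> S \<ge> 0) \<and> (\<Sum>S\<in>Pow {1..3}. \<theta> S) = 1 \<and>
      (\<forall>i\<in>{1..3}. (\<Sum>S\<in>{S\<in>Pow {1..3}. i \<in> S}. \<theta> S) = x i)}"
proof -
  define \<theta> :: "nat set \<Rightarrow> real" where "\<theta> = (\<lambda>S. (if S = {} then t0 else 0) + (if S = {1} then t1 else 0)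
     + (if S = {2} then t2 else 0) + (if S = {3} then t3 else 0) + (if S = {1,2} then t12 else 0)
     + (if S = {1,3} then t13 else 0) + (if S = {2,3} then t23 else 0) + (if S = {1,2,3} then t123 else 0))"
  have v: "\<theta> {} = t0" "\<theta> {1} = t1" "\<theta> {2} = t2" "\<theta> {3} = t3" "\<theta> {1,2} = t12"
     "\<theta> {1,3} = t13" "\<theta> {2,3} = t23" "\<theta> {1,2,3} = t123"
    unfolding \<theta>_def by (simp_all add: doubleton_eq_iff insert_eq_iff insert_commute)
  have A: "\<forall>S. \<theta> S \<ge> 0" unfolding \<theta>_def using assms(1-8) by (intro allI add_nonneg_nonneg) auto
  have B: "(\<Sum>S\<in>Pow {1..3}. \<theta> S) = 1" unfolding sum_pow3 v using assms(9) by linarith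
  have C: "\<forall>i\<in>{1..3}. (\<Sum>S\<in>{S\<in>Pow {1..3}. i \<in> S}. \<theta> S) = x i"
  proof
    fix i :: nat assume "i \<in> {1..3}"
    then have "i = 1 \<or> i = 2 \<or> i = 3" by auto
    moreover have p1: "(\<Sum>S\<in>{S\<in>Pow {1..3}. 1 \<in> S}. \<theta> S) = x 1" unfolding sm1 v using assms(10) by linarith
    moreover have p2: "(\<Sum>S\<in>{S\<in>Pow {1..3}. 2 \<in> S}. \<theta> S) = x 2" unfolding sm2 v using assms(11) by linarith
    moreover have p3: "(\<Sum>S\<in>{S\<in>Pow {1..3}. 3 \<in> S}. \<theta> S) = x 3" unfolding sm3 v using assms(12) by linarith
    ultimately show "(\<Sum>S\<in>{S\<in>Pow {1..3}. i \<in> S}. \<theta> S) = x i" by (elim disjE) (simp_all only: p1 p2 p3)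
  qed
  have D: "t0 * f {} + t1 * f {1} + t2 * f {2} + t3 * f {3} + t12 * f {1,2} + t13 * f {1,3}
     + t23 * f {2,3} + t123 * f {1,2,3} = (\<Sum>S\<in>Pow {1..3}. \<theta> S * f S)"
    unfolding sum_pow3 v by (rule refl)
  show ?thesis by (intro CollectI exI[of _ \<theta>] conjI D A B C)
qed

lemma ins_norm: "{2,1::nat} = {1,2}" "{3,1::nat} = {1,3}" "{3,2::nat} = {2,3}"
  "{2,3,1::nat} = {1,2,3}" by auto

lemma ffacts:
  assumes "f \<in> Fcl 3"
  shows "f {} = 0" "f {1,2,3} = 1" "0 \<le> f {1}" "0 \<le> f {2}" "0 \<le> f {3}"
    "f {1} \<le> f {1,2}" "f {1} \<le> f {1,3}" "f {2} \<le> f {1,2}" "f {2} \<le> f {2,3}"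
    "f {3} \<le> f {1,3}" "f {3} \<le> f {2,3}" "f {1,2} \<le> 1" "f {1,3} \<le> 1" "f {2,3} \<le> 1"
    "f {1,2} \<le> f {1} + f {2}" "f {1,3} \<le> f {1} + f {3}" "f {2,3} \<le> f {2} + f {3}"
    "1 + f {1} \<le> f {1,2} + f {1,3}" "1 + f {2} \<le> f {1,2} + f {2,3}" "1 + f {3} \<le> f {1,3} + f {2,3}"
    "1 \<le> f {1} + f {2,3}" "1 \<le> f {2} + f {1,3}" "1 \<le> f {3} + f {1,2}"
proof -
  have mo: "\<And>S T. S \<subseteq> T \<Longrightarrow> T \<subseteq> {1,2,3} \<Longrightarrow> f S \<le> f T"
    using assms unfolding Fcl_def monotone_sf_def i3 by blast
  have sm: "\<And>S T. S \<subseteq> {1,2,3} \<Longrightarrow> T \<subseteq> {1,2,3} \<Longrightarrow> f S + f T \<ge> f (S \<inter> T) + f (S \<union> T)"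
    using assms unfolding Fcl_def submodular_sf_def i3 by blast
  have e: "f {} = 0" "f {1,2,3} = 1" using assms unfolding Fcl_def i3 by auto
  show "f {} = 0" "f {1,2,3} = 1" by (fact e)+
  show "0 \<le> f {1}" using mo[of "{}" "{1}"] e by simp
  show "0 \<le> f {2}" using mo[of "{}" "{2}"] e by simp
  show "0 \<le> f {3}" using mo[of "{}" "{3}"] e by simp
  show "f {1} \<le> f {1,2}" using mo[of "{1}" "{1,2}"] by simp
  show "f {1} \<le> f {1,3}" using mo[of "{1}" "{1,3}"] by simp
  show "f {2} \<le> f {1,2}" using mo[of "{2}" "{1,2}"] by simp
  show "f {2} \<le> f {2,3}" using mo[of "{2}" "{2,3}"] by simp
  show "f {3} \<le> f {1,3}" using mo[of "{3}" "{1,3}"] by simp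
  show "f {3} \<le> f {2,3}" using mo[of "{3}" "{2,3}"] by simp
  show "f {1,2} \<le> 1" using mo[of "{1,2}" "{1,2,3}"] e by simp
  show "f {1,3} \<le> 1" using mo[of "{1,3}" "{1,2,3}"] e by simp
  show "f {2,3} \<le> 1" using mo[of "{2,3}" "{1,2,3}"] e by simp
  have "{1} \<inter> {2} = ({}::nat set)" "{1} \<union> {2} = {1,2::nat}" by auto
  then show "f {1,2} \<le> f {1} + f {2}" using sm[of "{1}" "{2}"] e by simp
  have "{1} \<inter> {3} = ({}::nat set)" "{1} \<union> {3} = {1,3::nat}" by auto
  then show "f {1,3} \<le> f {1} + f {3}" using sm[of "{1}" "{3}"] e by simp
  have "{2} \<inter> {3} = ({}::nat set)" "{2} \<union> {3} = {2,3::nat}" by auto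
  then show "f {2,3} \<le> f {2} + f {3}" using sm[of "{2}" "{3}"] e by simp
  have i1: "{1,2} \<inter> {1,3} = {1::nat}" "{1,2} \<union> {1,3} = {1,2,3::nat}" by auto
  show "1 + f {1} \<le> f {1,2} + f {1,3}" using sm[of "{1,2}" "{1,3}"] e i1 by simp
  have i2: "{1,2} \<inter> {2,3} = {2::nat}" "{1,2} \<union> {2,3} = {1,2,3::nat}" by auto
  show "1 + f {2} \<le> f {1,2} + f {2,3}" using sm[of "{1,2}" "{2,3}"] e i2 by simp
  have i4: "{1,3} \<inter> {2,3} = {3::nat}" "{1,3} \<union> {2,3} = {1,2,3::nat}" by auto
  show "1 + f {3} \<le> f {1,3} + f {2,3}" using sm[of "{1,3}" "{2,3}"] e i4 by simp
  have i5: "{1} \<inter> {2,3} = ({}::nat set)" "{1} \<union> {2,3} = {1,2,3::nat}" by auto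
  show "1 \<le> f {1} + f {2,3}" using sm[of "{1}" "{2,3}"] e i5 by simp
  have i6: "{2} \<inter> {1,3} = ({}::nat set)" "{2} \<union> {1,3} = {1,2,3::nat}" by auto
  show "1 \<le> f {2} + f {1,3}" using sm[of "{2}" "{1,3}"] e i6 by simp
  have i7: "{3} \<inter> {1,2} = ({}::nat set)" "{3} \<union> {1,2} = {1,2,3::nat}" by auto
  show "1 \<le> f {3} + f {1,2}" using sm[of "{3}" "{1,2}"] e i7 by simp
qed

definition Vset :: "(nat set \<Rightarrow> real) \<Rightarrow> (nat \<Rightarrow> real) \<Rightarrow> real set" where
  "Vset f x = {(\<Sum>S\<in>Pow {1..3}. \<theta> S * f S) | \<theta>.
      (\<forall>S. \<theta> S \<ge> 0) \<and> (\<Sum>S\<in>Pow {1..3}. \<theta> S) = 1 \<and>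
      (\<forall>i\<in>{1..3}. (\<Sum>S\<in>{S\<in>Pow {1..3}. i \<in> S}. \<theta> S) = x i)}"

lemma aff_expand: "aff f i x = lam f i 0 + lam f i 1 * x 1 + lam f i 2 * x 2 + lam f i 3 * x 3"
  unfolding aff_def i3 by (simp add: add.assoc)

lemma lamv1: "lam f 1 0 = 0" "lam f 1 1 = f {1}" "lam f 1 2 = f {2}" "lam f 1 3 = f {3}"
  by (simp_all add: lam_def lamvecs_def marg_def insert_commute)

lemma lamv2: "lam f 2 0 = f {2} - (f {2,3} - f {3})" "lam f 2 1 = f {1} - f {2} + (f {2,3} - f {3})" "lam f 2 2 = (f {2,3} - f {3})" "lam f 2 3 = (f {2,3} - f {2})"
  by (simp_all add: lam_def lamvecs_def marg_def insert_commute)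

lemma lamv3: "lam f 3 0 = f {1} - (f {1,3} - f {3})" "lam f 3 1 = (f {1,3} - f {3})" "lam f 3 2 = (f {2,3} - f {3})" "lam f 3 3 = (f {1,3} - f {1})"
  by (simp_all add: lam_def lamvecs_def marg_def insert_commute)

lemma lamv4: "lam f 4 0 = f {2} - (f {1,2} - f {1})" "lam f 4 1 = (f {1,2} - f {2})" "lam f 4 2 = (f {1,2} - f {1})" "lam f 4 3 = (f {2,3} - f {2})"
  by (simp_all add: lam_def lamvecs_def marg_def insert_commute)

lemma lamv5: "lam f 5 0 = f {2,3} - (f {1,3} - f {1}) - (f {1,2} - f {1})" "lam f 5 1 = (f {1,2} - f {1}) + f {1,3} - f {2,3}" "lam f 5 2 = (f {1,2} - f {1})" "lam f 5 3 = (f {1,3} - f {1})"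
  by (simp_all add: lam_def lamvecs_def marg_def insert_commute)

lemma lamv6: "lam f 6 0 = f {1} - (f {1,3} - f {3})" "lam f 6 1 = (f {1,3} - f {3})" "lam f 6 2 = f {2} - f {1} + (f {1,3} - f {3})" "lam f 6 3 = (f {1,3} - f {1})"
  by (simp_all add: lam_def lamvecs_def marg_def insert_commute)

lemma lamv7: "lam f 7 0 = f {2} - (f {2,3} - f {3})" "lam f 7 1 = (f {1,3} - f {3})" "lam f 7 2 = (f {2,3} - f {3})" "lam f 7 3 = (f {2,3} - f {2})"
  by (simp_all add: lam_def lamvecs_def marg_def insert_commute)

lemma lamv8: "lam f 8 0 = f {2} - (f {1,2} - f {1})" "lam f 8 1 = (f {1,2} - f {2})" "lam f 8 2 = (f {1,2} - f {1})" "lam f 8 3 = (f {1,3} - f {1})"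
  by (simp_all add: lam_def lamvecs_def marg_def insert_commute)

lemma lamv9: "lam f 9 0 = f {1,3} - (f {1,2} - f {2}) - (f {2,3} - f {2})" "lam f 9 1 = (f {1,2} - f {2})" "lam f 9 2 = (f {1,2} - f {2}) + f {2,3} - f {1,3}" "lam f 9 3 = (f {2,3} - f {2})"
  by (simp_all add: lam_def lamvecs_def marg_def insert_commute)

lemma lamv10: "lam f 10 0 = f {1} - (f {1,2} - f {2})" "lam f 10 1 = (f {1,2} - f {2})" "lam f 10 2 = (f {1,2} - f {1})" "lam f 10 3 = f {3} - f {2} + (f {1,2} - f {1})"
  by (simp_all add: lam_def lamvecs_def marg_def insert_commute)

lemma lamv11: "lam f 11 0 = f {2} - (f {2,3} - f {3})" "lam f 11 1 = (f {1,2} - f {2})" "lam f 11 2 = (f {2,3} - f {3})" "lam f 11 3 = (f {2,3} - f {2})"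
  by (simp_all add: lam_def lamvecs_def marg_def insert_commute)

lemma lamv12: "lam f 12 0 = f {3} - (f {1,3} - f {1})" "lam f 12 1 = (f {1,3} - f {3})" "lam f 12 2 = (f {1,2} - f {1})" "lam f 12 3 = (f {1,3} - f {1})"
  by (simp_all add: lam_def lamvecs_def marg_def insert_commute)

lemma lamv13: "lam f 13 0 = f {1,2} - (f {1,3} - f {3}) - (f {2,3} - f {3})" "lam f 13 1 = (f {1,3} - f {3})" "lam f 13 2 = (f {2,3} - f {3})" "lam f 13 3 = (f {2,3} - f {3}) + f {1,3} - f {1,2}"
  by (simp_all add: lam_def lamvecs_def marg_def insert_commute)

lemma lamv14: "lam f 14 0 = f {1,2} + f {1,3} + f {2,3} - 2" "lam f 14 1 = 1 - f {2,3}" "lam f 14 2 = 1 - f {1,3}" "lam f 14 3 = 1 - f {1,2}"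
  by (simp_all add: lam_def lamvecs_def marg_def insert_commute)

lemma inV1:
  fixes f :: "nat set \<Rightarrow> real"
  assumes bx: "\<forall>i\<in>{1..3}. 0 \<le> x i \<and> x i \<le> 1" and e0: "f {} = 0" and e1: "f {1,2,3} = 1"
    and c0: "(x 1 + x 2 + x 3) \<le> 1"
  shows "aff f 1 x \<in> Vset f x"
proof -
  have b: "0 \<le> x 1" "x 1 \<le> 1" "0 \<le> x 2" "x 2 \<le> 1" "0 \<le> x 3" "x 3 \<le> 1" using bx by auto
  have "(1 - (x 1 + x 2 + x 3)) * f {} + (x 1) * f {1} + (x 2) * f {2} + (x 3) * f {3} + (0) * f {1,2} + (0) * f {1,3} + (0) * f {2,3} + (0) * f {1,2,3} \<in> Vset f x"
    unfolding Vset_def by (rule wit) (use b c0 in linarith)+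
  moreover have "(1 - (x 1 + x 2 + x 3)) * f {} + (x 1) * f {1} + (x 2) * f {2} + (x 3) * f {3} + (0) * f {1,2} + (0) * f {1,3} + (0) * f {2,3} + (0) * f {1,2,3} = aff f 1 x"
    unfolding aff_expand lamv1 using e0 e1 by (simp add: algebra_simps)
  ultimately show ?thesis by simp
qed

lemma inV2:
  fixes f :: "nat set \<Rightarrow> real"
  assumes bx: "\<forall>i\<in>{1..3}. 0 \<le> x i \<and> x i \<le> 1" and e0: "f {} = 0" and e1: "f {1,2,3} = 1"
    and c0: "(x 1 + x 2 + x 3) \<ge> 1"
    and c1: "x 1 + x 3 \<le> 1"
    and c2: "x 1 + x 2 \<le> 1"
  shows "aff f 2 x \<in> Vset f x"
proof -
  have b: "0 \<le> x 1" "x 1 \<le> 1" "0 \<le> x 2" "x 2 \<le> 1" "0 \<le> x 3" "x 3 \<le> 1" using bx by auto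
  have "(0) * f {} + (x 1) * f {1} + (1 - x 1 - x 3) * f {2} + (1 - x 1 - x 2) * f {3} + (0) * f {1,2} + (0) * f {1,3} + ((x 1 + x 2 + x 3) - 1) * f {2,3} + (0) * f {1,2,3} \<in> Vset f x"
    unfolding Vset_def by (rule wit) (use b c0 c1 c2 in linarith)+
  moreover have "(0) * f {} + (x 1) * f {1} + (1 - x 1 - x 3) * f {2} + (1 - x 1 - x 2) * f {3} + (0) * f {1,2} + (0) * f {1,3} + ((x 1 + x 2 + x 3) - 1) * f {2,3} + (0) * f {1,2,3} = aff f 2 x"
    unfolding aff_expand lamv2 using e0 e1 by (simp add: algebra_simps)
  ultimately show ?thesis by simp
qed

lemma inV3:
  fixes f :: "nat set \<Rightarrow> real"
  assumes bx: "\<forall>i\<in>{1..3}. 0 \<le> x i \<and> x i \<le> 1" and e0: "f {} = 0" and e1: "f {1,2,3} = 1"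
    and c0: "x 1 + x 2 \<le> 1"
    and c1: "x 1 + x 3 \<ge> 1"
  shows "aff f 3 x \<in> Vset f x"
proof -
  have b: "0 \<le> x 1" "x 1 \<le> 1" "0 \<le> x 2" "x 2 \<le> 1" "0 \<le> x 3" "x 3 \<le> 1" using bx by auto
  have "(0) * f {} + (1 - x 3) * f {1} + (0) * f {2} + (1 - x 1 - x 2) * f {3} + (0) * f {1,2} + (x 1 + x 3 - 1) * f {1,3} + (x 2) * f {2,3} + (0) * f {1,2,3} \<in> Vset f x"
    unfolding Vset_def by (rule wit) (use b c0 c1 in linarith)+
  moreover have "(0) * f {} + (1 - x 3) * f {1} + (0) * f {2} + (1 - x 1 - x 2) * f {3} + (0) * f {1,2} + (x 1 + x 3 - 1) * f {1,3} + (x 2) * f {2,3} + (0) * f {1,2,3} = aff f 3 x"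
    unfolding aff_expand lamv3 using e0 e1 by (simp add: algebra_simps)
  ultimately show ?thesis by simp
qed

lemma inV4:
  fixes f :: "nat set \<Rightarrow> real"
  assumes bx: "\<forall>i\<in>{1..3}. 0 \<le> x i \<and> x i \<le> 1" and e0: "f {} = 0" and e1: "f {1,2,3} = 1"
    and c0: "x 1 + x 3 \<le> 1"
    and c1: "x 1 + x 2 \<ge> 1"
  shows "aff f 4 x \<in> Vset f x"
proof -
  have b: "0 \<le> x 1" "x 1 \<le> 1" "0 \<le> x 2" "x 2 \<le> 1" "0 \<le> x 3" "x 3 \<le> 1" using bx by auto
  have "(0) * f {} + (1 - x 2) * f {1} + (1 - x 1 - x 3) * f {2} + (0) * f {3} + (x 1 + x 2 - 1) * f {1,2} + (0) * f {1,3} + (x 3) * f {2,3} + (0) * f {1,2,3} \<in> Vset f x"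
    unfolding Vset_def by (rule wit) (use b c0 c1 in linarith)+
  moreover have "(0) * f {} + (1 - x 2) * f {1} + (1 - x 1 - x 3) * f {2} + (0) * f {3} + (x 1 + x 2 - 1) * f {1,2} + (0) * f {1,3} + (x 3) * f {2,3} + (0) * f {1,2,3} = aff f 4 x"
    unfolding aff_expand lamv4 using e0 e1 by (simp add: algebra_simps)
  ultimately show ?thesis by simp
qed

lemma inV5:
  fixes f :: "nat set \<Rightarrow> real"
  assumes bx: "\<forall>i\<in>{1..3}. 0 \<le> x i \<and> x i \<le> 1" and e0: "f {} = 0" and e1: "f {1,2,3} = 1"
    and c0: "x 1 + x 2 \<ge> 1"
    and c1: "x 1 + x 3 \<ge> 1"
    and c2: "(x 1 + x 2 + x 3) \<le> 2"
  shows "aff f 5 x \<in> Vset f x"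
proof -
  have b: "0 \<le> x 1" "x 1 \<le> 1" "0 \<le> x 2" "x 2 \<le> 1" "0 \<le> x 3" "x 3 \<le> 1" using bx by auto
  have "(0) * f {} + (2 - (x 1 + x 2 + x 3)) * f {1} + (0) * f {2} + (0) * f {3} + (x 1 + x 2 - 1) * f {1,2} + (x 1 + x 3 - 1) * f {1,3} + (1 - x 1) * f {2,3} + (0) * f {1,2,3} \<in> Vset f x"
    unfolding Vset_def by (rule wit) (use b c0 c1 c2 in linarith)+
  moreover have "(0) * f {} + (2 - (x 1 + x 2 + x 3)) * f {1} + (0) * f {2} + (0) * f {3} + (x 1 + x 2 - 1) * f {1,2} + (x 1 + x 3 - 1) * f {1,3} + (1 - x 1) * f {2,3} + (0) * f {1,2,3} = aff f 5 x"
    unfolding aff_expand lamv5 using e0 e1 by (simp add: algebra_simps)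
  ultimately show ?thesis by simp
qed

lemma inV6:
  fixes f :: "nat set \<Rightarrow> real"
  assumes bx: "\<forall>i\<in>{1..3}. 0 \<le> x i \<and> x i \<le> 1" and e0: "f {} = 0" and e1: "f {1,2,3} = 1"
    and c0: "(x 1 + x 2 + x 3) \<ge> 1"
    and c1: "x 2 + x 3 \<le> 1"
    and c2: "x 2 + x 1 \<le> 1"
  shows "aff f 6 x \<in> Vset f x"
proof -
  have b: "0 \<le> x 1" "x 1 \<le> 1" "0 \<le> x 2" "x 2 \<le> 1" "0 \<le> x 3" "x 3 \<le> 1" using bx by auto
  have "(0) * f {} + (1 - x 2 - x 3) * f {1} + (x 2) * f {2} + (1 - x 2 - x 1) * f {3} + (0) * f {1,2} + ((x 1 + x 2 + x 3) - 1) * f {1,3} + (0) * f {2,3} + (0) * f {1,2,3} \<in> Vset f x"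
    unfolding Vset_def by (rule wit) (use b c0 c1 c2 in linarith)+
  moreover have "(0) * f {} + (1 - x 2 - x 3) * f {1} + (x 2) * f {2} + (1 - x 2 - x 1) * f {3} + (0) * f {1,2} + ((x 1 + x 2 + x 3) - 1) * f {1,3} + (0) * f {2,3} + (0) * f {1,2,3} = aff f 6 x"
    unfolding aff_expand lamv6 using e0 e1 by (simp add: algebra_simps)
  ultimately show ?thesis by simp
qed

lemma inV7:
  fixes f :: "nat set \<Rightarrow> real"
  assumes bx: "\<forall>i\<in>{1..3}. 0 \<le> x i \<and> x i \<le> 1" and e0: "f {} = 0" and e1: "f {1,2,3} = 1"
    and c0: "x 2 + x 1 \<le> 1"
    and c1: "x 2 + x 3 \<ge> 1"
  shows "aff f 7 x \<in> Vset f x"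
proof -
  have b: "0 \<le> x 1" "x 1 \<le> 1" "0 \<le> x 2" "x 2 \<le> 1" "0 \<le> x 3" "x 3 \<le> 1" using bx by auto
  have "(0) * f {} + (0) * f {1} + (1 - x 3) * f {2} + (1 - x 2 - x 1) * f {3} + (0) * f {1,2} + (x 1) * f {1,3} + (x 2 + x 3 - 1) * f {2,3} + (0) * f {1,2,3} \<in> Vset f x"
    unfolding Vset_def by (rule wit) (use b c0 c1 in linarith)+
  moreover have "(0) * f {} + (0) * f {1} + (1 - x 3) * f {2} + (1 - x 2 - x 1) * f {3} + (0) * f {1,2} + (x 1) * f {1,3} + (x 2 + x 3 - 1) * f {2,3} + (0) * f {1,2,3} = aff f 7 x"
    unfolding aff_expand lamv7 using e0 e1 by (simp add: algebra_simps)
  ultimately show ?thesis by simp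
qed

lemma inV8:
  fixes f :: "nat set \<Rightarrow> real"
  assumes bx: "\<forall>i\<in>{1..3}. 0 \<le> x i \<and> x i \<le> 1" and e0: "f {} = 0" and e1: "f {1,2,3} = 1"
    and c0: "x 2 + x 3 \<le> 1"
    and c1: "x 2 + x 1 \<ge> 1"
  shows "aff f 8 x \<in> Vset f x"
proof -
  have b: "0 \<le> x 1" "x 1 \<le> 1" "0 \<le> x 2" "x 2 \<le> 1" "0 \<le> x 3" "x 3 \<le> 1" using bx by auto
  have "(0) * f {} + (1 - x 2 - x 3) * f {1} + (1 - x 1) * f {2} + (0) * f {3} + (x 2 + x 1 - 1) * f {1,2} + (x 3) * f {1,3} + (0) * f {2,3} + (0) * f {1,2,3} \<in> Vset f x"
    unfolding Vset_def by (rule wit) (use b c0 c1 in linarith)+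
  moreover have "(0) * f {} + (1 - x 2 - x 3) * f {1} + (1 - x 1) * f {2} + (0) * f {3} + (x 2 + x 1 - 1) * f {1,2} + (x 3) * f {1,3} + (0) * f {2,3} + (0) * f {1,2,3} = aff f 8 x"
    unfolding aff_expand lamv8 using e0 e1 by (simp add: algebra_simps)
  ultimately show ?thesis by simp
qed

lemma inV9:
  fixes f :: "nat set \<Rightarrow> real"
  assumes bx: "\<forall>i\<in>{1..3}. 0 \<le> x i \<and> x i \<le> 1" and e0: "f {} = 0" and e1: "f {1,2,3} = 1"
    and c0: "x 2 + x 1 \<ge> 1"
    and c1: "x 2 + x 3 \<ge> 1"
    and c2: "(x 1 + x 2 + x 3) \<le> 2"
  shows "aff f 9 x \<in> Vset f x"
proof -
  have b: "0 \<le> x 1" "x 1 \<le> 1" "0 \<le> x 2" "x 2 \<le> 1" "0 \<le> x 3" "x 3 \<le> 1" using bx by auto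
  have "(0) * f {} + (0) * f {1} + (2 - (x 1 + x 2 + x 3)) * f {2} + (0) * f {3} + (x 2 + x 1 - 1) * f {1,2} + (1 - x 2) * f {1,3} + (x 2 + x 3 - 1) * f {2,3} + (0) * f {1,2,3} \<in> Vset f x"
    unfolding Vset_def by (rule wit) (use b c0 c1 c2 in linarith)+
  moreover have "(0) * f {} + (0) * f {1} + (2 - (x 1 + x 2 + x 3)) * f {2} + (0) * f {3} + (x 2 + x 1 - 1) * f {1,2} + (1 - x 2) * f {1,3} + (x 2 + x 3 - 1) * f {2,3} + (0) * f {1,2,3} = aff f 9 x"
    unfolding aff_expand lamv9 using e0 e1 by (simp add: algebra_simps)
  ultimately show ?thesis by simp
qed

lemma inV10:
  fixes f :: "nat set \<Rightarrow> real"
  assumes bx: "\<forall>i\<in>{1..3}. 0 \<le> x i \<and> x i \<le> 1" and e0: "f {} = 0" and e1: "f {1,2,3} = 1"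
    and c0: "(x 1 + x 2 + x 3) \<ge> 1"
    and c1: "x 3 + x 2 \<le> 1"
    and c2: "x 3 + x 1 \<le> 1"
  shows "aff f 10 x \<in> Vset f x"
proof -
  have b: "0 \<le> x 1" "x 1 \<le> 1" "0 \<le> x 2" "x 2 \<le> 1" "0 \<le> x 3" "x 3 \<le> 1" using bx by auto
  have "(0) * f {} + (1 - x 3 - x 2) * f {1} + (1 - x 3 - x 1) * f {2} + (x 3) * f {3} + ((x 1 + x 2 + x 3) - 1) * f {1,2} + (0) * f {1,3} + (0) * f {2,3} + (0) * f {1,2,3} \<in> Vset f x"
    unfolding Vset_def by (rule wit) (use b c0 c1 c2 in linarith)+
  moreover have "(0) * f {} + (1 - x 3 - x 2) * f {1} + (1 - x 3 - x 1) * f {2} + (x 3) * f {3} + ((x 1 + x 2 + x 3) - 1) * f {1,2} + (0) * f {1,3} + (0) * f {2,3} + (0) * f {1,2,3} = aff f 10 x"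
    unfolding aff_expand lamv10 using e0 e1 by (simp add: algebra_simps)
  ultimately show ?thesis by simp
qed

lemma inV11:
  fixes f :: "nat set \<Rightarrow> real"
  assumes bx: "\<forall>i\<in>{1..3}. 0 \<le> x i \<and> x i \<le> 1" and e0: "f {} = 0" and e1: "f {1,2,3} = 1"
    and c0: "x 3 + x 1 \<le> 1"
    and c1: "x 3 + x 2 \<ge> 1"
  shows "aff f 11 x \<in> Vset f x"
proof -
  have b: "0 \<le> x 1" "x 1 \<le> 1" "0 \<le> x 2" "x 2 \<le> 1" "0 \<le> x 3" "x 3 \<le> 1" using bx by auto
  have "(0) * f {} + (0) * f {1} + (1 - x 3 - x 1) * f {2} + (1 - x 2) * f {3} + (x 1) * f {1,2} + (0) * f {1,3} + (x 3 + x 2 - 1) * f {2,3} + (0) * f {1,2,3} \<in> Vset f x"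
    unfolding Vset_def by (rule wit) (use b c0 c1 in linarith)+
  moreover have "(0) * f {} + (0) * f {1} + (1 - x 3 - x 1) * f {2} + (1 - x 2) * f {3} + (x 1) * f {1,2} + (0) * f {1,3} + (x 3 + x 2 - 1) * f {2,3} + (0) * f {1,2,3} = aff f 11 x"
    unfolding aff_expand lamv11 using e0 e1 by (simp add: algebra_simps)
  ultimately show ?thesis by simp
qed

lemma inV12:
  fixes f :: "nat set \<Rightarrow> real"
  assumes bx: "\<forall>i\<in>{1..3}. 0 \<le> x i \<and> x i \<le> 1" and e0: "f {} = 0" and e1: "f {1,2,3} = 1"
    and c0: "x 3 + x 2 \<le> 1"
    and c1: "x 3 + x 1 \<ge> 1"
  shows "aff f 12 x \<in> Vset f x"
proof -
  have b: "0 \<le> x 1" "x 1 \<le> 1" "0 \<le> x 2" "x 2 \<le> 1" "0 \<le> x 3" "x 3 \<le> 1" using bx by auto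
  have "(0) * f {} + (1 - x 3 - x 2) * f {1} + (0) * f {2} + (1 - x 1) * f {3} + (x 2) * f {1,2} + (x 3 + x 1 - 1) * f {1,3} + (0) * f {2,3} + (0) * f {1,2,3} \<in> Vset f x"
    unfolding Vset_def by (rule wit) (use b c0 c1 in linarith)+
  moreover have "(0) * f {} + (1 - x 3 - x 2) * f {1} + (0) * f {2} + (1 - x 1) * f {3} + (x 2) * f {1,2} + (x 3 + x 1 - 1) * f {1,3} + (0) * f {2,3} + (0) * f {1,2,3} = aff f 12 x"
    unfolding aff_expand lamv12 using e0 e1 by (simp add: algebra_simps)
  ultimately show ?thesis by simp
qed

lemma inV13:
  fixes f :: "nat set \<Rightarrow> real"
  assumes bx: "\<forall>i\<in>{1..3}. 0 \<le> x i \<and> x i \<le> 1" and e0: "f {} = 0" and e1: "f {1,2,3} = 1"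
    and c0: "x 3 + x 1 \<ge> 1"
    and c1: "x 3 + x 2 \<ge> 1"
    and c2: "(x 1 + x 2 + x 3) \<le> 2"
  shows "aff f 13 x \<in> Vset f x"
proof -
  have b: "0 \<le> x 1" "x 1 \<le> 1" "0 \<le> x 2" "x 2 \<le> 1" "0 \<le> x 3" "x 3 \<le> 1" using bx by auto
  have "(0) * f {} + (0) * f {1} + (0) * f {2} + (2 - (x 1 + x 2 + x 3)) * f {3} + (1 - x 3) * f {1,2} + (x 3 + x 1 - 1) * f {1,3} + (x 3 + x 2 - 1) * f {2,3} + (0) * f {1,2,3} \<in> Vset f x"
    unfolding Vset_def by (rule wit) (use b c0 c1 c2 in linarith)+
  moreover have "(0) * f {} + (0) * f {1} + (0) * f {2} + (2 - (x 1 + x 2 + x 3)) * f {3} + (1 - x 3) * f {1,2} + (x 3 + x 1 - 1) * f {1,3} + (x 3 + x 2 - 1) * f {2,3} + (0) * f {1,2,3} = aff f 13 x"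
    unfolding aff_expand lamv13 using e0 e1 by (simp add: algebra_simps)
  ultimately show ?thesis by simp
qed

lemma inV14:
  fixes f :: "nat set \<Rightarrow> real"
  assumes bx: "\<forall>i\<in>{1..3}. 0 \<le> x i \<and> x i \<le> 1" and e0: "f {} = 0" and e1: "f {1,2,3} = 1"
    and c0: "(x 1 + x 2 + x 3) \<ge> 2"
  shows "aff f 14 x \<in> Vset f x"
proof -
  have b: "0 \<le> x 1" "x 1 \<le> 1" "0 \<le> x 2" "x 2 \<le> 1" "0 \<le> x 3" "x 3 \<le> 1" using bx by auto
  have "(0) * f {} + (0) * f {1} + (0) * f {2} + (0) * f {3} + (1 - x 3) * f {1,2} + (1 - x 2) * f {1,3} + (1 - x 1) * f {2,3} + ((x 1 + x 2 + x 3) - 2) * f {1,2,3} \<in> Vset f x"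
    unfolding Vset_def by (rule wit) (use b c0 in linarith)+
  moreover have "(0) * f {} + (0) * f {1} + (0) * f {2} + (0) * f {3} + (1 - x 3) * f {1,2} + (1 - x 2) * f {1,3} + (1 - x 1) * f {2,3} + ((x 1 + x 2 + x 3) - 2) * f {1,2,3} = aff f 14 x"
    unfolding aff_expand lamv14 using e0 e1 by (simp add: algebra_simps)
  ultimately show ?thesis by simp
qed

lemma affub1:
  fixes f :: "nat set \<Rightarrow> real" and \<theta> :: "nat set \<Rightarrow> real"
  assumes fF: "f \<in> Fcl 3"
    and nn: "\<forall>S. \<theta> S \<ge> 0" and s1: "(\<Sum>S\<in>Pow {1..3::nat}. \<theta> S) = 1"
    and mg: "\<forall>i\<in>{1..3}. (\<Sum>S\<in>{S\<in>Pow {1..3::nat}. i \<in> S}. \<theta> S) = x i"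
  shows "(\<Sum>S\<in>Pow {1..3::nat}. \<theta> S * f S) \<le> aff f 1 x"
proof -
  note F = ffacts[OF fF]
  show ?thesis unfolding aff_def
    apply (rule ub[OF nn s1 mg])
    using F  by (simp only: lamv1; linarith)+
qed

lemma affub2:
  fixes f :: "nat set \<Rightarrow> real" and \<theta> :: "nat set \<Rightarrow> real"
  assumes fF: "f \<in> Fcl 3"
    and g: "f \<in> F31"
    and nn: "\<forall>S. \<theta> S \<ge> 0" and s1: "(\<Sum>S\<in>Pow {1..3::nat}. \<theta> S) = 1"
    and mg: "\<forall>i\<in>{1..3}. (\<Sum>S\<in>{S\<in>Pow {1..3::nat}. i \<in> S}. \<theta> S) = x i"
  shows "(\<Sum>S\<in>Pow {1..3::nat}. \<theta> S * f S) \<le> aff f 2 x"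
proof -
  note F = ffacts[OF fF]
  have G: "f {1,3} - f {1} \<le> f {2,3} - f {2}" "f {1,2} - f {1} \<le> f {2,3} - f {3}"
    using g unfolding F31_def marg_def by (simp_all add: insert_commute)
  show ?thesis unfolding aff_def
    apply (rule ub[OF nn s1 mg])
    using F G by (simp only: lamv2; linarith)+
qed

lemma affub3:
  fixes f :: "nat set \<Rightarrow> real" and \<theta> :: "nat set \<Rightarrow> real"
  assumes fF: "f \<in> Fcl 3"
    and g: "f \<in> F31"
    and nn: "\<forall>S. \<theta> S \<ge> 0" and s1: "(\<Sum>S\<in>Pow {1..3::nat}. \<theta> S) = 1"
    and mg: "\<forall>i\<in>{1..3}. (\<Sum>S\<in>{S\<in>Pow {1..3::nat}. i \<in> S}. \<theta> S) = x i"
  shows "(\<Sum>S\<in>Pow {1..3::nat}. \<theta> S * f S) \<le> aff f 3 x"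
proof -
  note F = ffacts[OF fF]
  have G: "f {1,3} - f {1} \<le> f {2,3} - f {2}" "f {1,2} - f {1} \<le> f {2,3} - f {3}"
    using g unfolding F31_def marg_def by (simp_all add: insert_commute)
  show ?thesis unfolding aff_def
    apply (rule ub[OF nn s1 mg])
    using F G by (simp only: lamv3; linarith)+
qed

lemma affub4:
  fixes f :: "nat set \<Rightarrow> real" and \<theta> :: "nat set \<Rightarrow> real"
  assumes fF: "f \<in> Fcl 3"
    and g: "f \<in> F31"
    and nn: "\<forall>S. \<theta> S \<ge> 0" and s1: "(\<Sum>S\<in>Pow {1..3::nat}. \<theta> S) = 1"
    and mg: "\<forall>i\<in>{1..3}. (\<Sum>S\<in>{S\<in>Pow {1..3::nat}. i \<in> S}. \<theta> S) = x i"
  shows "(\<Sum>S\<in>Pow {1..3::nat}. \<theta> S * f S) \<le> aff f 4 x"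
proof -
  note F = ffacts[OF fF]
  have G: "f {1,3} - f {1} \<le> f {2,3} - f {2}" "f {1,2} - f {1} \<le> f {2,3} - f {3}"
    using g unfolding F31_def marg_def by (simp_all add: insert_commute)
  show ?thesis unfolding aff_def
    apply (rule ub[OF nn s1 mg])
    using F G by (simp only: lamv4; linarith)+
qed

lemma affub5:
  fixes f :: "nat set \<Rightarrow> real" and \<theta> :: "nat set \<Rightarrow> real"
  assumes fF: "f \<in> Fcl 3"
    and g: "f \<in> F31"
    and nn: "\<forall>S. \<theta> S \<ge> 0" and s1: "(\<Sum>S\<in>Pow {1..3::nat}. \<theta> S) = 1"
    and mg: "\<forall>i\<in>{1..3}. (\<Sum>S\<in>{S\<in>Pow {1..3::nat}. i \<in> S}. \<theta> S) = x i"
  shows "(\<Sum>S\<in>Pow {1..3::nat}. \<theta> S * f S) \<le> aff f 5 x"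
proof -
  note F = ffacts[OF fF]
  have G: "f {1,3} - f {1} \<le> f {2,3} - f {2}" "f {1,2} - f {1} \<le> f {2,3} - f {3}"
    using g unfolding F31_def marg_def by (simp_all add: insert_commute)
  show ?thesis unfolding aff_def
    apply (rule ub[OF nn s1 mg])
    using F G by (simp only: lamv5; linarith)+
qed

lemma affub6:
  fixes f :: "nat set \<Rightarrow> real" and \<theta> :: "nat set \<Rightarrow> real"
  assumes fF: "f \<in> Fcl 3"
    and g: "f \<in> F32"
    and nn: "\<forall>S. \<theta> S \<ge> 0" and s1: "(\<Sum>S\<in>Pow {1..3::nat}. \<theta> S) = 1"
    and mg: "\<forall>i\<in>{1..3}. (\<Sum>S\<in>{S\<in>Pow {1..3::nat}. i \<in> S}. \<theta> S) = x i"
  shows "(\<Sum>S\<in>Pow {1..3::nat}. \<theta> S * f S) \<le> aff f 6 x"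
proof -
  note F = ffacts[OF fF]
  have G: "f {2,3} - f {2} \<le> f {1,3} - f {1}" "f {1,2} - f {2} \<le> f {1,3} - f {3}"
    using g unfolding F32_def marg_def by (simp_all add: insert_commute)
  show ?thesis unfolding aff_def
    apply (rule ub[OF nn s1 mg])
    using F G by (simp only: lamv6; linarith)+
qed

lemma affub7:
  fixes f :: "nat set \<Rightarrow> real" and \<theta> :: "nat set \<Rightarrow> real"
  assumes fF: "f \<in> Fcl 3"
    and g: "f \<in> F32"
    and nn: "\<forall>S. \<theta> S \<ge> 0" and s1: "(\<Sum>S\<in>Pow {1..3::nat}. \<theta> S) = 1"
    and mg: "\<forall>i\<in>{1..3}. (\<Sum>S\<in>{S\<in>Pow {1..3::nat}. i \<in> S}. \<theta> S) = x i"
  shows "(\<Sum>S\<in>Pow {1..3::nat}. \<theta> S * f S) \<le> aff f 7 x"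
proof -
  note F = ffacts[OF fF]
  have G: "f {2,3} - f {2} \<le> f {1,3} - f {1}" "f {1,2} - f {2} \<le> f {1,3} - f {3}"
    using g unfolding F32_def marg_def by (simp_all add: insert_commute)
  show ?thesis unfolding aff_def
    apply (rule ub[OF nn s1 mg])
    using F G by (simp only: lamv7; linarith)+
qed

lemma affub8:
  fixes f :: "nat set \<Rightarrow> real" and \<theta> :: "nat set \<Rightarrow> real"
  assumes fF: "f \<in> Fcl 3"
    and g: "f \<in> F32"
    and nn: "\<forall>S. \<theta> S \<ge> 0" and s1: "(\<Sum>S\<in>Pow {1..3::nat}. \<theta> S) = 1"
    and mg: "\<forall>i\<in>{1..3}. (\<Sum>S\<in>{S\<in>Pow {1..3::nat}. i \<in> S}. \<theta> S) = x i"
  shows "(\<Sum>S\<in>Pow {1..3::nat}. \<theta> S * f S) \<le> aff f 8 x"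
proof -
  note F = ffacts[OF fF]
  have G: "f {2,3} - f {2} \<le> f {1,3} - f {1}" "f {1,2} - f {2} \<le> f {1,3} - f {3}"
    using g unfolding F32_def marg_def by (simp_all add: insert_commute)
  show ?thesis unfolding aff_def
    apply (rule ub[OF nn s1 mg])
    using F G by (simp only: lamv8; linarith)+
qed

lemma affub9:
  fixes f :: "nat set \<Rightarrow> real" and \<theta> :: "nat set \<Rightarrow> real"
  assumes fF: "f \<in> Fcl 3"
    and g: "f \<in> F32"
    and nn: "\<forall>S. \<theta> S \<ge> 0" and s1: "(\<Sum>S\<in>Pow {1..3::nat}. \<theta> S) = 1"
    and mg: "\<forall>i\<in>{1..3}. (\<Sum>S\<in>{S\<in>Pow {1..3::nat}. i \<in> S}. \<theta> S) = x i"
  shows "(\<Sum>S\<in>Pow {1..3::nat}. \<theta> S * f S) \<le> aff f 9 x"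
proof -
  note F = ffacts[OF fF]
  have G: "f {2,3} - f {2} \<le> f {1,3} - f {1}" "f {1,2} - f {2} \<le> f {1,3} - f {3}"
    using g unfolding F32_def marg_def by (simp_all add: insert_commute)
  show ?thesis unfolding aff_def
    apply (rule ub[OF nn s1 mg])
    using F G by (simp only: lamv9; linarith)+
qed

lemma affub10:
  fixes f :: "nat set \<Rightarrow> real" and \<theta> :: "nat set \<Rightarrow> real"
  assumes fF: "f \<in> Fcl 3"
    and g: "f \<in> F33"
    and nn: "\<forall>S. \<theta> S \<ge> 0" and s1: "(\<Sum>S\<in>Pow {1..3::nat}. \<theta> S) = 1"
    and mg: "\<forall>i\<in>{1..3}. (\<Sum>S\<in>{S\<in>Pow {1..3::nat}. i \<in> S}. \<theta> S) = x i"
  shows "(\<Sum>S\<in>Pow {1..3::nat}. \<theta> S * f S) \<le> aff f 10 x"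
proof -
  note F = ffacts[OF fF]
  have G: "f {2,3} - f {3} \<le> f {1,2} - f {1}" "f {1,3} - f {3} \<le> f {1,2} - f {2}"
    using g unfolding F33_def marg_def by (simp_all add: insert_commute)
  show ?thesis unfolding aff_def
    apply (rule ub[OF nn s1 mg])
    using F G by (simp only: lamv10; linarith)+
qed

lemma affub11:
  fixes f :: "nat set \<Rightarrow> real" and \<theta> :: "nat set \<Rightarrow> real"
  assumes fF: "f \<in> Fcl 3"
    and g: "f \<in> F33"
    and nn: "\<forall>S. \<theta> S \<ge> 0" and s1: "(\<Sum>S\<in>Pow {1..3::nat}. \<theta> S) = 1"
    and mg: "\<forall>i\<in>{1..3}. (\<Sum>S\<in>{S\<in>Pow {1..3::nat}. i \<in> S}. \<theta> S) = x i"
  shows "(\<Sum>S\<in>Pow {1..3::nat}. \<theta> S * f S) \<le> aff f 11 x"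
proof -
  note F = ffacts[OF fF]
  have G: "f {2,3} - f {3} \<le> f {1,2} - f {1}" "f {1,3} - f {3} \<le> f {1,2} - f {2}"
    using g unfolding F33_def marg_def by (simp_all add: insert_commute)
  show ?thesis unfolding aff_def
    apply (rule ub[OF nn s1 mg])
    using F G by (simp only: lamv11; linarith)+
qed

lemma affub12:
  fixes f :: "nat set \<Rightarrow> real" and \<theta> :: "nat set \<Rightarrow> real"
  assumes fF: "f \<in> Fcl 3"
    and g: "f \<in> F33"
    and nn: "\<forall>S. \<theta> S \<ge> 0" and s1: "(\<Sum>S\<in>Pow {1..3::nat}. \<theta> S) = 1"
    and mg: "\<forall>i\<in>{1..3}. (\<Sum>S\<in>{S\<in>Pow {1..3::nat}. i \<in> S}. \<theta> S) = x i"
  shows "(\<Sum>S\<in>Pow {1..3::nat}. \<theta> S * f S) \<le> aff f 12 x"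
proof -
  note F = ffacts[OF fF]
  have G: "f {2,3} - f {3} \<le> f {1,2} - f {1}" "f {1,3} - f {3} \<le> f {1,2} - f {2}"
    using g unfolding F33_def marg_def by (simp_all add: insert_commute)
  show ?thesis unfolding aff_def
    apply (rule ub[OF nn s1 mg])
    using F G by (simp only: lamv12; linarith)+
qed

lemma affub13:
  fixes f :: "nat set \<Rightarrow> real" and \<theta> :: "nat set \<Rightarrow> real"
  assumes fF: "f \<in> Fcl 3"
    and g: "f \<in> F33"
    and nn: "\<forall>S. \<theta> S \<ge> 0" and s1: "(\<Sum>S\<in>Pow {1..3::nat}. \<theta> S) = 1"
    and mg: "\<forall>i\<in>{1..3}. (\<Sum>S\<in>{S\<in>Pow {1..3::nat}. i \<in> S}. \<theta> S) = x i"
  shows "(\<Sum>S\<in>Pow {1..3::nat}. \<theta> S * f S) \<le> aff f 13 x"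
proof -
  note F = ffacts[OF fF]
  have G: "f {2,3} - f {3} \<le> f {1,2} - f {1}" "f {1,3} - f {3} \<le> f {1,2} - f {2}"
    using g unfolding F33_def marg_def by (simp_all add: insert_commute)
  show ?thesis unfolding aff_def
    apply (rule ub[OF nn s1 mg])
    using F G by (simp only: lamv13; linarith)+
qed

lemma affub14:
  fixes f :: "nat set \<Rightarrow> real" and \<theta> :: "nat set \<Rightarrow> real"
  assumes fF: "f \<in> Fcl 3"
    and nn: "\<forall>S. \<theta> S \<ge> 0" and s1: "(\<Sum>S\<in>Pow {1..3::nat}. \<theta> S) = 1"
    and mg: "\<forall>i\<in>{1..3}. (\<Sum>S\<in>{S\<in>Pow {1..3::nat}. i \<in> S}. \<theta> S) = x i"
  shows "(\<Sum>S\<in>Pow {1..3::nat}. \<theta> S * f S) \<le> aff f 14 x"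
proof -
  note F = ffacts[OF fF]
  show ?thesis unfolding aff_def
    apply (rule ub[OF nn s1 mg])
    using F  by (simp only: lamv14; linarith)+
qed

theorem mainTheorem5:
  fixes f :: "nat set \<Rightarrow> real" and x :: "nat \<Rightarrow> real" and k :: nat
  assumes "f \<in> Fcl 3"
    and "\<forall>i\<in>{1..3}. 0 \<le> x i \<and> x i \<le> 1"
    and "k \<in> {1,2,3}" and "f \<in> S3 k"
  shows "concave_closure 3 f x =
    min (Min ((\<lambda>i. aff f i x) ` {4*k-2 .. 4*k+1})) (min (aff f 1 x) (aff f 14 x))"
proof -
  note F = ffacts[OF assms(1)]
  have cc: "concave_closure 3 f x = Sup (Vset f x)" by (simp add: concave_closure_def Vset_def)
  define M where "M = min (Min ((\<lambda>i. aff f i x) ` {4*k-2 .. 4*k+1})) (min (aff f 1 x) (aff f 14 x))"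
  have Mle: "\<And>i. i \<in> {4*k-2..4*k+1} \<Longrightarrow> M \<le> aff f i x"
    unfolding M_def by (rule min.coboundedI1, rule Min_le) auto
  have M1: "M \<le> aff f 1 x" and M14: "M \<le> aff f 14 x" unfolding M_def by auto
  have Mge: "v \<le> M" if "\<And>i. i \<in> {4*k-2..4*k+1} \<Longrightarrow> v \<le> aff f i x" "v \<le> aff f 1 x" "v \<le> aff f 14 x" for v
    unfolding M_def using that by (auto simp: Min_ge_iff)
  have kc: "(k = 1 \<and> f \<in> F31) \<or> (k = 2 \<and> f \<in> F32) \<or> (k = 3 \<and> f \<in> F33)"
    using assms(3,4) unfolding S3_def by auto
  have UB: "v \<le> M" if vV: "v \<in> Vset f x" for v
  proof -
    obtain \<theta> where v: "v = (\<Sum>S\<in>Pow {1..3::nat}. \<theta> S * f S)" and nn: "\<forall>S. \<theta> S \<ge> 0"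
      and s1: "(\<Sum>S\<in>Pow {1..3::nat}. \<theta> S) = 1"
      and mg: "\<forall>i\<in>{1..3}. (\<Sum>S\<in>{S\<in>Pow {1..3::nat}. i \<in> S}. \<theta> S) = x i"
      using vV unfolding Vset_def by blast
    show ?thesis
    proof (rule Mge)
      show "v \<le> aff f 1 x" unfolding v by (rule affub1[OF assms(1) nn s1 mg])
      show "v \<le> aff f 14 x" unfolding v by (rule affub14[OF assms(1) nn s1 mg])
      fix i assume i: "i \<in> {4*k-2..4*k+1}"
      from kc show "v \<le> aff f i x"
      proof (elim disjE conjE)
        assume "k = 1" "f \<in> F31"
        then have "i = 2 \<or> i = 3 \<or> i = 4 \<or> i = 5" using i by auto
        then show ?thesis unfolding v using affub2[OF assms(1) \<open>f \<in> F31\<close> nn s1 mg]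
          affub3[OF assms(1) \<open>f \<in> F31\<close> nn s1 mg] affub4[OF assms(1) \<open>f \<in> F31\<close> nn s1 mg]
          affub5[OF assms(1) \<open>f \<in> F31\<close> nn s1 mg] by (elim disjE) simp_all
      next
        assume "k = 2" "f \<in> F32"
        then have "i = 6 \<or> i = 7 \<or> i = 8 \<or> i = 9" using i by auto
        then show ?thesis unfolding v using affub6[OF assms(1) \<open>f \<in> F32\<close> nn s1 mg]
          affub7[OF assms(1) \<open>f \<in> F32\<close> nn s1 mg] affub8[OF assms(1) \<open>f \<in> F32\<close> nn s1 mg]
          affub9[OF assms(1) \<open>f \<in> F32\<close> nn s1 mg] by (elim disjE) simp_all
      next
        assume "k = 3" "f \<in> F33"
        then have "i = 10 \<or> i = 11 \<or> i = 12 \<or> i = 13" using i by auto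
        then show ?thesis unfolding v using affub10[OF assms(1) \<open>f \<in> F33\<close> nn s1 mg]
          affub11[OF assms(1) \<open>f \<in> F33\<close> nn s1 mg] affub12[OF assms(1) \<open>f \<in> F33\<close> nn s1 mg]
          affub13[OF assms(1) \<open>f \<in> F33\<close> nn s1 mg] by (elim disjE) simp_all
      qed
    qed
  qed
  have LB: "\<exists>v\<in>Vset f x. M \<le> v"
  proof (cases "x 1 + x 2 + x 3 \<le> 1")
    case True
    then show ?thesis using inV1[OF assms(2) F(1,2)] M1 by blast
  next
    case c1: False
    show ?thesis
    proof (cases "x 1 + x 2 + x 3 \<ge> 2")
      case True
      then show ?thesis using inV14[OF assms(2) F(1,2)] M14 by blast
    next
      case c2: False
      from kc show ?thesis
      proof (elim disjE conjE)
        assume "k = 1"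
        then have m: "M \<le> aff f 2 x" "M \<le> aff f 3 x" "M \<le> aff f 4 x" "M \<le> aff f 5 x" using Mle by auto
        show ?thesis
        proof (cases "x 1 + x 2 \<le> 1"; cases "x 1 + x 3 \<le> 1")
          assume "x 1 + x 2 \<le> 1" "x 1 + x 3 \<le> 1" then show ?thesis
            using inV2[OF assms(2) F(1,2)] c1 c2 m by auto
        next
          assume "x 1 + x 2 \<le> 1" "\<not> x 1 + x 3 \<le> 1" then show ?thesis
            using inV3[OF assms(2) F(1,2)] c1 c2 m by auto
        next
          assume "\<not> x 1 + x 2 \<le> 1" "x 1 + x 3 \<le> 1" then show ?thesis
            using inV4[OF assms(2) F(1,2)] c1 c2 m by auto
        next
          assume "\<not> x 1 + x 2 \<le> 1" "\<not> x 1 + x 3 \<le> 1" then show ?thesis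
            using inV5[OF assms(2) F(1,2)] c1 c2 m by auto
        qed
      next
        assume "k = 2"
        then have m: "M \<le> aff f 6 x" "M \<le> aff f 7 x" "M \<le> aff f 8 x" "M \<le> aff f 9 x" using Mle by auto
        show ?thesis
        proof (cases "x 2 + x 1 \<le> 1"; cases "x 2 + x 3 \<le> 1")
          assume "x 2 + x 1 \<le> 1" "x 2 + x 3 \<le> 1" then show ?thesis
            using inV6[OF assms(2) F(1,2)] c1 c2 m by auto
        next
          assume "x 2 + x 1 \<le> 1" "\<not> x 2 + x 3 \<le> 1" then show ?thesis
            using inV7[OF assms(2) F(1,2)] c1 c2 m by auto
        next
          assume "\<not> x 2 + x 1 \<le> 1" "x 2 + x 3 \<le> 1" then show ?thesis
            using inV8[OF assms(2) F(1,2)] c1 c2 m by auto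
        next
          assume "\<not> x 2 + x 1 \<le> 1" "\<not> x 2 + x 3 \<le> 1" then show ?thesis
            using inV9[OF assms(2) F(1,2)] c1 c2 m by auto
        qed
      next
        assume "k = 3"
        then have m: "M \<le> aff f 10 x" "M \<le> aff f 11 x" "M \<le> aff f 12 x" "M \<le> aff f 13 x" using Mle by auto
        show ?thesis
        proof (cases "x 3 + x 1 \<le> 1"; cases "x 3 + x 2 \<le> 1")
          assume "x 3 + x 1 \<le> 1" "x 3 + x 2 \<le> 1" then show ?thesis
            using inV10[OF assms(2) F(1,2)] c1 c2 m by auto
        next
          assume "x 3 + x 1 \<le> 1" "\<not> x 3 + x 2 \<le> 1" then show ?thesis
            using inV11[OF assms(2) F(1,2)] c1 c2 m by auto
        next
          assume "\<not> x 3 + x 1 \<le> 1" "x 3 + x 2 \<le> 1" then show ?thesis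
            using inV12[OF assms(2) F(1,2)] c1 c2 m by auto
        next
          assume "\<not> x 3 + x 1 \<le> 1" "\<not> x 3 + x 2 \<le> 1" then show ?thesis
            using inV13[OF assms(2) F(1,2)] c1 c2 m by auto
        qed
      qed
    qed
  qed
  then obtain v where "v \<in> Vset f x" "M \<le> v" by blast
  with UB have "M \<in> Vset f x" by (metis order.antisym)
  then have "Sup (Vset f x) = M" using UB by (intro cSup_eq_maximum) auto
  then show ?thesis using cc M_def by simp
qed

end
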